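(* Let $k\geq 3$ be an odd integer and let $n,s$ be integers with $2\leq s\leq n-2$. Then $mp^{k}(A_{n,s})=s(n-s)$.
   Context: The arrangement graph $A_{n,s}$ ($n\geq 2$, $1\leq s\leq n-1$) has as vertices all sequences $[a_1,\dots,a_s]$ of $s$ distinct elements of $\{1,\dots,n\}$, two vertices being adjacent iff they differ in exactly one position; it is $s(n-s)$-regular with $n!/(n-s)!$ vertices. An integer $k$-matching of $G$ is a function $h:E(G)\to\{0,1,\dots,k\}$ with $\sum_{e\in\Gamma(v)}h(e)\leq k$ for all $v$ ($\Gamma(v)$ the edges incident with $v$); it is perfect if every vertex has sum $k$, and almost perfect if exactly one vertex has sum $k-1$ and all others have sum $k$. $mp^{k}(G)$ is the minimum size of $F\subseteq E(G)$ such that $G-F$ has neither a perfect nor an almost perfect integer $k$-matching. *)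

theory Defs
  imports Main
begin

text \<open>A simple graph is given by a vertex set V and an edge set E of 2-element subsets of V.\<close>

definition incident_edges :: "'a set set \<Rightarrow> 'a \<Rightarrow> 'a set set" where
  "incident_edges E v = {e \<in> E. v \<in> e}"

definition is_int_matching :: "nat \<Rightarrow> 'a set \<Rightarrow> 'a set set \<Rightarrow> ('a set \<Rightarrow> nat) \<Rightarrow> bool" where
  "is_int_matching k V E h \<longleftrightarrow>
     (\<forall>e\<in>E. h e \<le> k) \<and> (\<forall>v\<in>V. (\<Sum>e\<in>incident_edges E v. h e) \<le> k)"

definition has_perfect_int_matching :: "nat \<Rightarrow> 'a set \<Rightarrow> 'a set set \<Rightarrow> bool" where
  "has_perfect_int_matching k V E \<longleftrightarrow>
     (\<exists>h. is_int_matching k V E h \<and> (\<forall>v\<in>V. (\<Sum>e\<in>incident_edges E v. h e) = k))"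

definition has_almost_perfect_int_matching :: "nat \<Rightarrow> 'a set \<Rightarrow> 'a set set \<Rightarrow> bool" where
  "has_almost_perfect_int_matching k V E \<longleftrightarrow>
     (\<exists>h. is_int_matching k V E h \<and>
        (\<exists>u\<in>V. (\<Sum>e\<in>incident_edges E u. h e) = k - 1 \<and>
                (\<forall>v\<in>V. v \<noteq> u \<longrightarrow> (\<Sum>e\<in>incident_edges E v. h e) = k)))"

definition mp_int :: "nat \<Rightarrow> 'a set \<Rightarrow> 'a set set \<Rightarrow> nat" where
  "mp_int k V E = (LEAST m. \<exists>F. F \<subseteq> E \<and> card F = m \<and>
        \<not> has_perfect_int_matching k V (E - F) \<and>
        \<not> has_almost_perfect_int_matching k V (E - F))"

definition arr_vertices :: "nat \<Rightarrow> nat \<Rightarrow> nat list set" where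
  "arr_vertices n s = {xs. length xs = s \<and> distinct xs \<and> set xs \<subseteq> {1..n}}"

definition arr_adj :: "nat \<Rightarrow> nat list \<Rightarrow> nat list \<Rightarrow> bool" where
  "arr_adj s xs ys \<longleftrightarrow> card {i. i < s \<and> xs ! i \<noteq> ys ! i} = 1"

definition arr_edges :: "nat \<Rightarrow> nat \<Rightarrow> nat list set set" where
  "arr_edges n s = {{xs, ys} | xs ys. xs \<in> arr_vertices n s \<and> ys \<in> arr_vertices n s \<and> arr_adj s xs ys}"

end

theory Submission
  imports Defs "HOL-Combinatorics.Permutations"
begin


definition rank :: "nat set \<Rightarrow> nat \<Rightarrow> nat" where
  "rank W a = card {w\<in>W. w < a}"

definition enum :: "nat set \<Rightarrow> nat \<Rightarrow> nat" where
  "enum W = the_inv_into W (rank W)"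

lemma rank_less_mono:
  assumes "finite W" "a \<in> W" "b \<in> W" "a < b"
  shows "rank W a < rank W b"
  unfolding rank_def
  by (rule psubset_card_mono) (use assms in auto)

lemma rank_inj: "finite W \<Longrightarrow> inj_on (rank W) W"
  by (metis inj_onI linorder_neq_iff rank_less_mono order_less_irrefl)

lemma rank_lt: assumes "finite W" "a \<in> W" shows "rank W a < card W"
  unfolding rank_def by (rule psubset_card_mono) (use assms in auto)

lemma rank_bij: assumes "finite W" shows "bij_betw (rank W) W {..<card W}"
proof -
  have "rank W ` W \<subseteq> {..<card W}" using rank_lt assms by auto
  moreover have "card (rank W ` W) = card {..<card W}"
    using card_image[OF rank_inj[OF assms]] by simp
  ultimately have "rank W ` W = {..<card W}"
    by (intro card_subset_eq) auto
  thus ?thesis using rank_inj[OF assms] by (simp add: bij_betw_def)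
qed

lemma enum_rank: "finite W \<Longrightarrow> a \<in> W \<Longrightarrow> enum W (rank W a) = a"
  unfolding enum_def by (rule the_inv_into_f_f[OF rank_inj])

lemma enum_in: "finite W \<Longrightarrow> i < card W \<Longrightarrow> enum W i \<in> W"
  unfolding enum_def using rank_bij
  by (metis bij_betw_def lessThan_iff the_inv_into_into subset_refl)

lemma rank_enum: "finite W \<Longrightarrow> i < card W \<Longrightarrow> rank W (enum W i) = i"
  unfolding enum_def using rank_bij
  by (metis bij_betw_def lessThan_iff f_the_inv_into_f)

lemma enum_inj: "finite W \<Longrightarrow> i < card W \<Longrightarrow> j < card W \<Longrightarrow> enum W i = enum W j \<Longrightarrow> i = j"
  by (metis rank_enum)

lemma extend_perm:
  assumes "finite S" "A \<subseteq> S" "inj_on f A" "f ` A \<subseteq> S"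
  shows "\<exists>\<sigma>. \<sigma> permutes S \<and> (\<forall>a\<in>A. \<sigma> a = f a)"
proof -
  have fA: "finite A" using assms finite_subset by blast
  have "card (S - A) = card (S - f ` A)"
    using assms fA by (simp add: card_Diff_subset card_image)
  then obtain g where g: "bij_betw g (S - A) (S - f ` A)"
    using finite_same_card_bij[of "S - A" "S - f ` A"] assms by auto
  define \<sigma> where "\<sigma> x = (if x \<in> A then f x else if x \<in> S then g x else x)" for x
  have "bij_betw \<sigma> S S"
  proof -
    have i1: "bij_betw \<sigma> A (f ` A)"
      using assms(3) by (simp add: bij_betw_def inj_on_def \<sigma>_def image_def)
    have i2: "bij_betw \<sigma> (S - A) (S - f ` A)"
      using g by (rule bij_betw_cong[THEN iffD1, rotated]) (simp add: \<sigma>_def)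
    have "bij_betw \<sigma> (A \<union> (S - A)) (f ` A \<union> (S - f ` A))"
      by (rule bij_betw_combine[OF i1 i2]) auto
    moreover have "A \<union> (S - A) = S" "f ` A \<union> (S - f ` A) = S" using assms by auto
    ultimately show ?thesis by simp
  qed
  moreover have "\<forall>x. x \<notin> S \<longrightarrow> \<sigma> x = x" using assms by (auto simp: \<sigma>_def)
  ultimately have "\<sigma> permutes S" by (intro bij_imp_permutes) auto
  thus ?thesis by (auto simp: \<sigma>_def)
qed




definition pr :: "nat \<Rightarrow> nat" where "pr i = (if even i then Suc i else i - 1)"

lemma pr_pr[simp]: "pr (pr i) = i" by (auto simp: pr_def)
lemma pr_neq[simp]: "pr i \<noteq> i" by (cases "even i") (auto simp: pr_def dest: odd_pos)
lemma pr_neq2[simp]: "i \<noteq> pr i" using pr_neq by metis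
lemma pr_eq_iff: "pr i = j \<longleftrightarrow> i = pr j" by (auto simp: pr_def)
lemma pr_lt: "even N \<Longrightarrow> i < N \<Longrightarrow> pr i < N"
  by (auto simp: pr_def) (metis Suc_lessI even_Suc)
lemma pr_div[simp]: "pr i div 2 = i div 2"
  by (auto simp: pr_def elim!: evenE oddE)

definition Lm :: "nat \<Rightarrow> nat \<Rightarrow> nat" where
  "Lm N a = 2 * ((a div 2 + 1) mod (N div 2))"

lemma Lm_pr[simp]: "Lm N (pr a) = Lm N a" by (simp add: Lm_def)
lemma Lm_lt: "even N \<Longrightarrow> 4 \<le> N \<Longrightarrow> Lm N a < N"
proof -
  assume "even N" "4 \<le> N"
  then obtain h where h: "N = 2 * h" "h \<ge> 2" by (auto elim!: evenE)
  have "(a div 2 + 1) mod h < h" using h by simp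
  thus ?thesis unfolding Lm_def using h by simp
qed
lemma Lm_div: "even N \<Longrightarrow> 4 \<le> N \<Longrightarrow> a < N \<Longrightarrow> Lm N a div 2 \<noteq> a div 2"
proof -
  assume "even N" "4 \<le> N" "a < N"
  then obtain h where h: "N = 2 * h" "h \<ge> 2" by (auto elim!: evenE)
  have t: "a div 2 < h" using h \<open>a < N\<close> by auto
  have "Lm N a div 2 = (a div 2 + 1) mod h" unfolding Lm_def using h by simp
  moreover have "(a div 2 + 1) mod h \<noteq> a div 2"
  proof (cases "a div 2 + 1 < h")
    case True thus ?thesis by simp
  next
    case False
    hence "a div 2 + 1 = h" using t by simp
    thus ?thesis using h by simp
  qed
  ultimately show ?thesis by simp
qed

definition mu :: "nat \<Rightarrow> nat \<Rightarrow> nat \<Rightarrow> nat \<times> nat" where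
  "mu N a b = (if b = Lm N a then (pr a, b)
     else if b = pr a then (a, pr (Lm N a))
     else if b = pr (Lm N a) then (a, pr a)
     else (a, pr b))"

lemma div_neq_imp: "x div 2 \<noteq> y div 2 \<Longrightarrow> x \<noteq> y \<and> x \<noteq> pr y \<and> pr x \<noteq> y \<and> pr x \<noteq> pr y"
  by (metis pr_div)

lemma mu_props:
  assumes N: "even N" "4 \<le> N" and ab: "a < N" "b < N" "a \<noteq> b"
  shows "fst (mu N a b) < N \<and> snd (mu N a b) < N \<and> fst (mu N a b) \<noteq> snd (mu N a b)
     \<and> mu N (fst (mu N a b)) (snd (mu N a b)) = (a, b)
     \<and> ((fst (mu N a b) = a \<and> snd (mu N a b) \<noteq> b) \<or> (fst (mu N a b) \<noteq> a \<and> snd (mu N a b) = b))"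
proof -
  have L: "Lm N a < N" using Lm_lt N by blast
  have D: "Lm N a \<noteq> a \<and> Lm N a \<noteq> pr a \<and> pr (Lm N a) \<noteq> a \<and> pr (Lm N a) \<noteq> pr a \<and> a \<noteq> Lm N a \<and> pr a \<noteq> Lm N a \<and> a \<noteq> pr (Lm N a) \<and> pr a \<noteq> pr (Lm N a)"
    using div_neq_imp[OF Lm_div[OF N ab(1)]] by metis
  have D0: "Lm N a \<noteq> a \<and> Lm N a \<noteq> pr a \<and> pr (Lm N a) \<noteq> a \<and> pr (Lm N a) \<noteq> pr a"
    using div_neq_imp[OF Lm_div[OF N ab(1)]] by blast
  have P: "\<And>i. i < N \<Longrightarrow> pr i < N" using pr_lt N by blast
  show ?thesis
    using L D P[of a] P[of b] P[of "Lm N a"] ab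
    by (auto simp: mu_def pr_eq_iff)
qed




lemma arr_adj_sym: "arr_adj s x y = arr_adj s y x"
proof -
  have "{i. i < s \<and> x ! i \<noteq> y ! i} = {i. i < s \<and> y ! i \<noteq> x ! i}" by auto
  thus ?thesis unfolding arr_adj_def by simp
qed

lemma diff_one:
  assumes "length x = s" "j < s" "c \<noteq> x ! j"
  shows "{i. i < s \<and> x ! i \<noteq> x[j := c] ! i} = {j}"
  using assms by (auto simp: nth_list_update)

lemma upd_adj:
  assumes "length x = s" "j < s" "c \<noteq> x ! j"
  shows "arr_adj s x (x[j := c])"
  unfolding arr_adj_def using diff_one[OF assms] by simp

lemma upd_V:
  assumes "x \<in> arr_vertices n s" "j < s" "b \<in> {1..n}" "b \<notin> set x"
  shows "x[j := b] \<in> arr_vertices n s"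
proof -
  have "set (x[j := b]) \<subseteq> insert b (set x)" by (rule set_update_subset_insert)
  moreover have "distinct (x[j := b])" using assms
    by (auto simp: arr_vertices_def intro!: distinct_list_update)
  ultimately show ?thesis using assms by (auto simp: arr_vertices_def)
qed

lemma adj_char:
  assumes "x \<in> arr_vertices n s" "y \<in> arr_vertices n s" "arr_adj s x y"
  shows "\<exists>j<s. \<exists>b. b \<in> {1..n} \<and> b \<notin> set x \<and> y = x[j := b]"
proof -
  have lx: "length x = s" and ly: "length y = s" and dy: "distinct y" and sy: "set y \<subseteq> {1..n}"
    using assms by (auto simp: arr_vertices_def)
  have c1: "card {i. i < s \<and> x ! i \<noteq> y ! i} = 1" using assms(3) unfolding arr_adj_def .
  obtain j where J: "{i. i < s \<and> x ! i \<noteq> y ! i} = {j}"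
    using c1 by (rule card_1_singletonE)
  hence j: "j < s" "x ! j \<noteq> y ! j" and oth: "\<And>i. i < s \<Longrightarrow> i \<noteq> j \<Longrightarrow> x ! i = y ! i"
    by blast+
  have yeq: "y = x[j := y ! j]"
  proof (rule nth_equalityI)
    show "length y = length (x[j := y ! j])" using lx ly by simp
    fix i assume "i < length y"
    then show "y ! i = x[j := y ! j] ! i" using lx ly oth j by (cases "i = j") auto
  qed
  have "y ! j \<in> {1..n}" using sy ly j by (auto intro: nth_mem)
  moreover have "y ! j \<notin> set x"
  proof
    assume "y ! j \<in> set x"
    then obtain i where i: "i < s" "x ! i = y ! j" using lx by (auto simp: in_set_conv_nth)
    have "i \<noteq> j" using i j by auto
    hence "y ! i = y ! j" using oth i by auto
    thus False using dy \<open>i \<noteq> j\<close> i(1) j(1) ly by (simp add: nth_eq_iff_index_eq)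
  qed
  ultimately show ?thesis using j yeq by blast
qed

lemma finite_V: "finite (arr_vertices n s)"
proof -
  have "arr_vertices n s \<subseteq> {xs. set xs \<subseteq> {1..n} \<and> length xs = s}"
    by (auto simp: arr_vertices_def)
  thus ?thesis using finite_lists_length_eq[of "{1..n}" s] finite_subset by blast
qed

lemma E_sub: assumes "e \<in> arr_edges n s" shows "e \<subseteq> arr_vertices n s \<and> card e = 2"
proof -
  obtain u v where uv: "e = {u, v}" "u \<in> arr_vertices n s" "v \<in> arr_vertices n s" "arr_adj s u v"
    using assms by (auto simp: arr_edges_def)
  have "u \<noteq> v" using uv(4) by (auto simp: arr_adj_def)
  thus ?thesis using uv by auto
qed

lemma finite_E: "finite (arr_edges n s)"
proof -
  have "arr_edges n s \<subseteq> Pow (arr_vertices n s)" using E_sub by blast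
  thus ?thesis using finite_V finite_subset by blast
qed

lemma incident_char:
  assumes "x \<in> arr_vertices n s"
  shows "incident_edges (arr_edges n s) x =
     (\<lambda>(j,b). {x, x[j := b]}) ` ({..<s} \<times> ({1..n} - set x))"
proof (intro set_eqI iffI)
  fix e assume "e \<in> incident_edges (arr_edges n s) x"
  then obtain u v where e: "e = {u, v}" "u \<in> arr_vertices n s" "v \<in> arr_vertices n s" "arr_adj s u v" "x \<in> e"
    by (auto simp: incident_edges_def arr_edges_def)
  then obtain y where y: "e = {x, y}" "y \<in> arr_vertices n s" "arr_adj s x y"
    using arr_adj_sym by (metis empty_iff insert_commute insert_iff)
  then obtain j b where "j < s" "b \<in> {1..n}" "b \<notin> set x" "y = x[j := b]"
    using adj_char[OF assms] by blast
  thus "e \<in> (\<lambda>(j,b). {x, x[j := b]}) ` ({..<s} \<times> ({1..n} - set x))" using y by auto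
next
  fix e assume "e \<in> (\<lambda>(j,b). {x, x[j := b]}) ` ({..<s} \<times> ({1..n} - set x))"
  then obtain j b where jb: "j < s" "b \<in> {1..n}" "b \<notin> set x" "e = {x, x[j := b]}" by auto
  have lx: "length x = s" using assms by (auto simp: arr_vertices_def)
  have "b \<noteq> x ! j" using jb lx by auto
  hence "arr_adj s x (x[j := b])" using upd_adj lx jb by blast
  moreover have "x[j := b] \<in> arr_vertices n s" using upd_V assms jb by blast
  ultimately show "e \<in> incident_edges (arr_edges n s) x" using assms jb
    by (auto simp: incident_edges_def arr_edges_def)
qed

lemma degree:
  assumes "x \<in> arr_vertices n s"
  shows "card (incident_edges (arr_edges n s) x) = s * (n - s)"
proof -
  have lx: "length x = s" and dx: "distinct x" and sx: "set x \<subseteq> {1..n}"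
    using assms by (auto simp: arr_vertices_def)
  have key: "j = j' \<and> b = b'"
    if A: "j \<in> {..<s}" "b \<in> {1..n} - set x" "j' \<in> {..<s}" "b' \<in> {1..n} - set x"
      and eq: "{x, x[j := b]} = {x, x[j' := b']}" for j b j' b'
  proof -
    have "x[j := b] \<noteq> x" using A lx by (metis lessThan_iff DiffD2 nth_list_update_eq nth_mem)
    moreover have "x[j' := b'] \<noteq> x" using A lx by (metis lessThan_iff DiffD2 nth_list_update_eq nth_mem)
    ultimately have e2: "x[j := b] = x[j' := b']" using eq by (metis doubleton_eq_iff)
    show ?thesis
    proof (cases "j = j'")
      case True thus ?thesis using e2 A lx by (metis lessThan_iff nth_list_update_eq)
    next
      case False
      hence "b = x ! j" using e2 A lx by (metis lessThan_iff nth_list_update_eq nth_list_update_neq)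
      thus ?thesis using A lx by auto
    qed
  qed
  have inj: "inj_on (\<lambda>(j,b). {x, x[j := b]}) ({..<s} \<times> ({1..n} - set x))"
    unfolding inj_on_def using key by auto
  have "card ({1..n} - set x) = n - s"
    using sx dx lx by (simp add: card_Diff_subset distinct_card)
  thus ?thesis unfolding incident_char[OF assms] card_image[OF inj] by (simp add: card_cartesian_product)
qed

lemma handshake:
  assumes "finite V" "finite X" "\<And>e. e \<in> X \<Longrightarrow> e \<subseteq> V \<and> card e = 2"
  shows "(\<Sum>v\<in>V. card {e\<in>X. v \<in> e}) = 2 * card X"
proof -
  have "(\<Sum>v\<in>V. card {e\<in>X. v \<in> e}) = (\<Sum>v\<in>V. \<Sum>e\<in>X. if v \<in> e then 1 else 0)"
    using assms by (simp add: sum.inter_filter[symmetric])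
  also have "\<dots> = (\<Sum>e\<in>X. \<Sum>v\<in>V. if v \<in> e then 1 else 0)" by (rule sum.swap)
  also have "\<dots> = (\<Sum>e\<in>X. card {v\<in>V. v \<in> e})" using assms by (simp add: sum.inter_filter[symmetric])
  also have "\<dots> = (\<Sum>e\<in>X. card (V \<inter> e))" by (intro sum.cong) (auto intro: arg_cong[where f=card])
  also have "\<dots> = (\<Sum>e\<in>X. 2)" using assms by (intro sum.cong) (auto simp: Int_absorb1)
  finally show ?thesis by simp
qed




definition W1 :: "nat \<Rightarrow> nat list \<Rightarrow> nat set" where "W1 n x = {1..n} - set (tl x)"
definition W2 :: "nat \<Rightarrow> nat list \<Rightarrow> nat set" where "W2 n x = {1..n} - set (drop 2 x)"

definition phi :: "nat \<Rightarrow> nat \<Rightarrow> nat list \<Rightarrow> nat list" where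
  "phi n s x = (if even (n - s + 1) then x[0 := enum (W1 n x) (pr (rank (W1 n x) (x ! 0)))]
     else (let W = W2 n x; ab = mu (n - s + 2) (rank W (x ! 0)) (rank W (x ! 1))
           in enum W (fst ab) # enum W (snd ab) # drop 2 x))"

locale arr =
  fixes n s :: nat
  assumes s2: "2 \<le> s" and sn: "s + 2 \<le> n"
begin

abbreviation "V \<equiv> arr_vertices n s"
abbreviation "E \<equiv> arr_edges n s"

lemma V_cons:
  assumes "x \<in> V"
  obtains p q rest where "x = p # q # rest" "p \<noteq> q" "p \<notin> set rest" "q \<notin> set rest"
    "distinct rest" "p \<in> {1..n}" "q \<in> {1..n}" "set rest \<subseteq> {1..n}" "length rest = s - 2"
proof -
  have l: "length x = s" "distinct x" "set x \<subseteq> {1..n}" using assms by (auto simp: arr_vertices_def)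
  then obtain p q rest where "x = p # q # rest" using s2
    by (metis Suc_le_length_iff numeral_2_eq_2)
  thus ?thesis using that l by auto
qed

lemma phi_props:
  assumes "x \<in> V"
  shows "phi n s x \<in> V \<and> phi n s (phi n s x) = x \<and> arr_adj s x (phi n s x)"
proof -
  obtain p q rest where x: "x = p # q # rest" "p \<noteq> q" "p \<notin> set rest" "q \<notin> set rest"
    "distinct rest" "p \<in> {1..n}" "q \<in> {1..n}" "set rest \<subseteq> {1..n}" "length rest = s - 2"
    using V_cons[OF assms] by blast
  have lx: "length x = s" using assms by (auto simp: arr_vertices_def)
  show ?thesis
  proof (cases "even (n - s + 1)")
    case True
    define W where "W = W1 n x"
    have fW: "finite W" by (simp add: W_def W1_def)
    have cW: "card W = n - s + 1"
    proof -
      have "card (set (q # rest)) = s - 1" using x s2 by (simp add: distinct_card)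
      moreover have "set (q # rest) \<subseteq> {1..n}" using x by auto
      ultimately show ?thesis unfolding W_def W1_def using x s2 sn
        by (simp add: card_Diff_subset)
    qed
    have pW: "p \<in> W" using x by (simp add: W_def W1_def)
    define i where "i = rank W p"
    have i: "i < card W" using rank_lt[OF fW pW] i_def by simp
    have j: "pr i < card W" using pr_lt[OF _ i] True cW by simp
    define c where "c = enum W (pr i)"
    have cW': "c \<in> W" using enum_in[OF fW j] c_def by simp
    have rc: "rank W c = pr i" using rank_enum[OF fW j] c_def by simp
    have cp: "c \<noteq> p" using rc i_def by (metis pr_neq)
    have phix: "phi n s x = x[0 := c]" using True by (simp add: phi_def W_def c_def i_def x)
    have y: "x[0 := c] = c # q # rest" using x by simp
    have W1y: "W1 n (x[0 := c]) = W" using x by (simp add: W1_def W_def)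
    have "phi n s (x[0 := c]) = x"
      using True W1y rc by (simp add: phi_def y i_def enum_rank[OF fW pW] x)
    moreover have "x[0 := c] \<in> V"
      using upd_V[OF assms, of 0 c] s2 cW' cp x by (auto simp: W_def W1_def)
    moreover have "arr_adj s x (x[0 := c])" using upd_adj[OF lx, of 0 c] s2 cp x by simp
    ultimately show ?thesis using phix by simp
  next
    case False
    define N where "N = n - s + 2"
    have N: "even N" "4 \<le> N" using False sn by (auto simp: N_def)
    define W where "W = W2 n x"
    have fW: "finite W" by (simp add: W_def W2_def)
    have cW: "card W = N"
    proof -
      have "card (set rest) = s - 2" using x by (simp add: distinct_card)
      thus ?thesis unfolding W_def W2_def N_def using x s2 sn
        by (simp add: card_Diff_subset)
    qed
    have pW: "p \<in> W" and qW: "q \<in> W" using x by (auto simp: W_def W2_def)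
    define a where "a = rank W p"
    define b where "b = rank W q"
    have a: "a < N" using rank_lt[OF fW pW] a_def cW by simp
    have b: "b < N" using rank_lt[OF fW qW] b_def cW by simp
    have ab: "a \<noteq> b" using a_def b_def x(2) by (metis enum_rank[OF fW pW] enum_rank[OF fW qW])
    obtain a' b' where m: "mu N a b = (a', b')" by fastforce
    have M: "a' < N" "b' < N" "a' \<noteq> b'" "mu N a' b' = (a, b)"
      "(a' = a \<and> b' \<noteq> b) \<or> (a' \<noteq> a \<and> b' = b)"
      using mu_props[OF N a b ab] m by auto
    define y where "y = enum W a' # enum W b' # rest"
    have gen: "phi n s z = enum (W2 n z) (fst (mu N (rank (W2 n z) (z!0)) (rank (W2 n z) (z!1))))
         # enum (W2 n z) (snd (mu N (rank (W2 n z) (z!0)) (rank (W2 n z) (z!1)))) # drop 2 z" for z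
      using False unfolding phi_def Let_def N_def by simp
    have x0: "x ! 0 = p" "x ! 1 = q" "drop 2 x = rest" using x by auto
    have phix: "phi n s x = y" unfolding gen[of x] x0 W_def[symmetric] a_def[symmetric] b_def[symmetric] m
      by (simp add: y_def)
    have W2y: "W2 n y = W" by (simp add: W2_def W_def y_def x)
    have ea: "enum W a' \<in> W" "enum W b' \<in> W" using enum_in[OF fW] M cW by auto
    have ra: "rank W (enum W a') = a'" "rank W (enum W b') = b'" using rank_enum[OF fW] M cW by auto
    have "phi n s y = x"
      unfolding gen[of y] W2y using ra M
      by (simp add: y_def a_def b_def enum_rank[OF fW pW] enum_rank[OF fW qW] x)
    moreover have "y \<in> V \<and> arr_adj s x y"
    proof (cases "a' = a")
      case True
      hence bb: "b' \<noteq> b" using M by auto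
      have y1: "y = x[1 := enum W b']" using True by (simp add: y_def x a_def enum_rank[OF fW pW])
      have nq: "enum W b' \<noteq> q" using bb b_def ra by metis
      have np: "enum W b' \<noteq> p" using ra M True a_def by metis
      have "y \<in> V" unfolding y1 using upd_V[OF assms, of 1 "enum W b'"] s2 ea nq np x
        by (auto simp: W_def W2_def)
      moreover have "arr_adj s x y" unfolding y1 using upd_adj[OF lx, of 1 "enum W b'"] s2 nq x by simp
      ultimately show ?thesis by simp
    next
      case False
      hence bb: "b' = b" using M by auto
      have y1: "y = x[0 := enum W a']" using bb by (simp add: y_def x b_def enum_rank[OF fW qW])
      have np: "enum W a' \<noteq> p" using False a_def ra by metis
      have nq: "enum W a' \<noteq> q" using ra M bb b_def by metis
      have "y \<in> V" unfolding y1 using upd_V[OF assms, of 0 "enum W a'"] s2 ea nq np x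
        by (auto simp: W_def W2_def)
      moreover have "arr_adj s x y" unfolding y1 using upd_adj[OF lx, of 0 "enum W a'"] s2 np x by simp
      ultimately show ?thesis by simp
    qed
    ultimately show ?thesis using phix by simp
  qed
qed

end



definition act :: "(nat \<Rightarrow> nat) \<times> (nat \<Rightarrow> nat) \<Rightarrow> nat list \<Rightarrow> nat list" where
  "act g x = map (\<lambda>i. fst g (x ! snd g i)) [0..<length x]"

definition Grp :: "nat \<Rightarrow> nat \<Rightarrow> ((nat \<Rightarrow> nat) \<times> (nat \<Rightarrow> nat)) set" where
  "Grp n s = {g. fst g permutes {1..n} \<and> snd g permutes {0..<s}}"

definition mult :: "(nat \<Rightarrow> nat) \<times> (nat \<Rightarrow> nat) \<Rightarrow> (nat \<Rightarrow> nat) \<times> (nat \<Rightarrow> nat) \<Rightarrow> (nat \<Rightarrow> nat) \<times> (nat \<Rightarrow> nat)" where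
  "mult g h = (fst g \<circ> fst h, snd h \<circ> snd g)"

definition eimg :: "(nat \<Rightarrow> nat) \<times> (nat \<Rightarrow> nat) \<Rightarrow> nat list set \<Rightarrow> nat list set" where
  "eimg g e = act g ` e"

lemma act_len[simp]: "length (act g x) = length x" by (simp add: act_def)
lemma act_nth[simp]: "i < length x \<Longrightarrow> act g x ! i = fst g (x ! snd g i)" by (simp add: act_def)

context arr
begin

abbreviation "G \<equiv> Grp n s"

lemma G_perm: assumes "g \<in> G" shows "fst g permutes {1..n}" "snd g permutes {0..<s}"
  using assms by (auto simp: Grp_def)

lemma tau_lt: "g \<in> G \<Longrightarrow> i < s \<Longrightarrow> snd g i < s"
  using permutes_in_image[OF G_perm(2)] by auto

lemma tau_surj: assumes "g \<in> G" "j < s" shows "\<exists>i<s. snd g i = j"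
proof -
  have "j \<in> snd g ` {0..<s}" using permutes_image[OF G_perm(2)[OF assms(1)]] assms(2) by simp
  thus ?thesis by auto
qed

lemma act_V: assumes "g \<in> G" "x \<in> V" shows "act g x \<in> V"
proof -
  have lx: "length x = s" and dx: "distinct x" and sx: "set x \<subseteq> {1..n}"
    using assms by (auto simp: arr_vertices_def)
  have "distinct (act g x)"
  proof (subst distinct_conv_nth, intro allI impI)
    fix i j assume "i < length (act g x)" "j < length (act g x)" "i \<noteq> j"
    hence ij: "i < s" "j < s" "i \<noteq> j" using lx by auto
    have "snd g i \<noteq> snd g j" using permutes_inj[OF G_perm(2)[OF assms(1)]] ij by (meson injD)
    hence "x ! snd g i \<noteq> x ! snd g j" using dx lx tau_lt[OF assms(1)] ij by (simp add: nth_eq_iff_index_eq)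
    hence "fst g (x ! snd g i) \<noteq> fst g (x ! snd g j)"
      using permutes_inj[OF G_perm(1)[OF assms(1)]] by (meson injD)
    thus "act g x ! i \<noteq> act g x ! j" using ij lx by simp
  qed
  moreover have "set (act g x) \<subseteq> {1..n}"
  proof
    fix v assume "v \<in> set (act g x)"
    then obtain i where i: "i < s" "v = fst g (x ! snd g i)" using lx by (auto simp: in_set_conv_nth)
    have "x ! snd g i \<in> {1..n}" using sx lx tau_lt[OF assms(1) i(1)] by (auto intro: nth_mem)
    thus "v \<in> {1..n}" using i permutes_in_image[OF G_perm(1)[OF assms(1)]] by simp
  qed
  ultimately show ?thesis using lx by (simp add: arr_vertices_def)
qed

lemma act_inj: assumes "g \<in> G" shows "inj_on (act g) V"
proof (rule inj_onI)
  fix x y assume xy: "x \<in> V" "y \<in> V" "act g x = act g y"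
  have l: "length x = s" "length y = s" using xy by (auto simp: arr_vertices_def)
  have e: "x ! snd g i = y ! snd g i" if "i < s" for i
  proof -
    have "fst g (x ! snd g i) = fst g (y ! snd g i)"
      using arg_cong[OF xy(3), of "\<lambda>z. z ! i"] that l by simp
    thus ?thesis using permutes_inj[OF G_perm(1)[OF assms]] by (meson injD)
  qed
  show "x = y"
  proof (rule nth_equalityI)
    show "length x = length y" using l by simp
    fix j assume "j < length x"
    then obtain i where "i < s" "snd g i = j" using tau_surj[OF assms] l by auto
    thus "x ! j = y ! j" using e by auto
  qed
qed

lemma act_surj: "g \<in> G \<Longrightarrow> act g ` V = V"
  using endo_inj_surj[OF finite_V _ act_inj] act_V by blast

lemma act_adj: assumes "g \<in> G" "x \<in> V" "y \<in> V" "arr_adj s x y"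
  shows "arr_adj s (act g x) (act g y)"
proof -
  have l: "length x = s" "length y = s" using assms by (auto simp: arr_vertices_def)
  have injs: "inj (fst g)" using permutes_inj[OF G_perm(1)[OF assms(1)]] .
  have eq1: "{i. i < s \<and> act g x ! i \<noteq> act g y ! i} = {i. i < s \<and> x ! snd g i \<noteq> y ! snd g i}"
    using l by (auto simp: inj_eq[OF injs])
  have eq2: "snd g ` {i. i < s \<and> x ! snd g i \<noteq> y ! snd g i} = {j. j < s \<and> x ! j \<noteq> y ! j}"
  proof (intro set_eqI iffI)
    fix j assume "j \<in> snd g ` {i. i < s \<and> x ! snd g i \<noteq> y ! snd g i}"
    then obtain i where i: "i < s" "x ! snd g i \<noteq> y ! snd g i" "j = snd g i" by blast
    thus "j \<in> {j. j < s \<and> x ! j \<noteq> y ! j}" using tau_lt[OF assms(1) i(1)] by simp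
  next
    fix j assume "j \<in> {j. j < s \<and> x ! j \<noteq> y ! j}"
    hence j: "j < s" "x ! j \<noteq> y ! j" by auto
    then obtain i where i: "i < s" "snd g i = j" using tau_surj[OF assms(1)] by blast
    hence "i \<in> {i. i < s \<and> x ! snd g i \<noteq> y ! snd g i}" using j by simp
    thus "j \<in> snd g ` {i. i < s \<and> x ! snd g i \<noteq> y ! snd g i}" by (rule image_eqI[where f="snd g" and x=i, OF i(2)[symmetric]])
  qed
  have inj3: "inj_on (snd g) {i. i < s \<and> x ! snd g i \<noteq> y ! snd g i}"
    by (rule inj_on_subset[OF permutes_inj[OF G_perm(2)[OF assms(1)]] subset_UNIV])
  have "card {i. i < s \<and> act g x ! i \<noteq> act g y ! i} = card {j. j < s \<and> x ! j \<noteq> y ! j}"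
    unfolding eq1 eq2[symmetric] by (rule card_image[OF inj3, symmetric])
  thus ?thesis using assms(4) unfolding arr_adj_def by simp
qed

lemma eimg_E: assumes "g \<in> G" "e \<in> E" shows "eimg g e \<in> E"
proof -
  obtain u v where uv: "e = {u, v}" "u \<in> V" "v \<in> V" "arr_adj s u v"
    using assms by (auto simp: arr_edges_def)
  have "eimg g e = {act g u, act g v}" by (simp add: eimg_def uv)
  moreover have "act g u \<in> V" "act g v \<in> V" "arr_adj s (act g u) (act g v)"
    using act_V[OF assms(1)] act_adj[OF assms(1)] uv by auto
  ultimately show ?thesis unfolding arr_edges_def by blast
qed

lemma mult_G: "g \<in> G \<Longrightarrow> h \<in> G \<Longrightarrow> mult g h \<in> G"
  by (auto simp: Grp_def mult_def intro: permutes_compose)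

lemma act_mult: assumes "g \<in> G" "h \<in> G" "x \<in> V"
  shows "act (mult g h) x = act g (act h x)"
proof -
  have l: "length x = s" using assms by (auto simp: arr_vertices_def)
  show ?thesis
    by (rule nth_equalityI) (use l tau_lt[OF assms(1)] in \<open>auto simp: mult_def\<close>)
qed

lemma eimg_mult: assumes "g \<in> G" "h \<in> G" "e \<subseteq> V"
  shows "eimg (mult g h) e = eimg g (eimg h e)"
  using act_mult[OF assms(1,2)] assms(3) by (auto simp: eimg_def image_image image_iff subset_iff)

lemma mult_inj: assumes "h \<in> G" "g \<in> G" "g' \<in> G" "mult h g = mult h g'" shows "g = g'"
proof -
  have 1: "fst h \<circ> fst g = fst h \<circ> fst g'" "snd g \<circ> snd h = snd g' \<circ> snd h"
    using assms(4) by (auto simp: mult_def)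
  have "fst g = fst g'"
  proof
    fix z show "fst g z = fst g' z"
      using fun_cong[OF 1(1), of z] permutes_inj[OF G_perm(1)[OF assms(1)]] by (auto dest: injD)
  qed
  moreover have "snd g = snd g'"
  proof
    fix z
    obtain w where "snd h w = z" using permutes_surj[OF G_perm(2)[OF assms(1)]] by (metis surjD)
    thus "snd g z = snd g' z" using fun_cong[OF 1(2), of w] by auto
  qed
  ultimately show ?thesis by (simp add: prod_eq_iff)
qed

lemma finite_G: "finite G"
proof -
  have "G = {p. p permutes {1..n}} \<times> {p. p permutes {0..<s}}" by (auto simp: Grp_def)
  thus ?thesis by (simp add: finite_permutations)
qed

lemma id_G: "(id, id) \<in> G" by (simp add: Grp_def permutes_id)

lemma mult_surj: assumes "h \<in> G" shows "mult h ` G = G"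
  by (rule endo_inj_surj[OF finite_G]) (use mult_G[OF assms] mult_inj[OF assms] in \<open>auto intro: inj_onI\<close>)

definition u0 :: "nat list" where "u0 = map Suc [0..<s]"
definition e0 :: "nat list set" where "e0 = {u0, u0[0 := Suc s]}"

lemma u0_V: "u0 \<in> V" using sn by (auto simp: u0_def arr_vertices_def distinct_map)

lemma e0_E: "e0 \<in> E"
proof -
  have a: "u0[0 := Suc s] \<in> V" using upd_V[OF u0_V, of 0 "Suc s"] s2 sn by (auto simp: u0_def)
  have "arr_adj s u0 (u0[0 := Suc s])" using upd_adj[of u0 s 0 "Suc s"] s2 by (auto simp: u0_def)
  thus ?thesis using a u0_V by (auto simp: e0_def arr_edges_def)
qed

lemma edge_trans: assumes "f \<in> E" shows "\<exists>h\<in>G. eimg h e0 = f"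
proof -
  obtain x y where xy: "f = {x, y}" "x \<in> V" "y \<in> V" "arr_adj s x y"
    using assms by (auto simp: arr_edges_def)
  obtain j b where jb: "j < s" "b \<in> {1..n}" "b \<notin> set x" "y = x[j := b]"
    using adj_char[OF xy(2,3,4)] by blast
  have lx: "length x = s" and dx: "distinct x" and sx: "set x \<subseteq> {1..n}"
    using xy by (auto simp: arr_vertices_def)
  define \<tau> where "\<tau> = Transposition.transpose 0 j"
  have tp: "\<tau> permutes {0..<s}" unfolding \<tau>_def using jb s2 by (intro permutes_swap_id) auto
  have tt: "\<tau> (\<tau> i) = i" for i by (simp add: \<tau>_def)
  have tlt: "i < s \<Longrightarrow> \<tau> i < s" for i using permutes_in_image[OF tp] by auto
  define f0 where "f0 c = (if c = Suc s then b else x ! \<tau> (c - 1))" for c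
  have "inj_on f0 {1..Suc s}"
  proof (rule inj_onI)
    fix c c' assume c: "c \<in> {1..Suc s}" "c' \<in> {1..Suc s}" "f0 c = f0 c'"
    have nb: "d \<in> {1..s} \<Longrightarrow> x ! \<tau> (d - 1) \<noteq> b" for d
      using jb(3) lx tlt[of "d - 1"] by (auto intro: nth_mem)
    show "c = c'"
    proof (cases "c = Suc s \<or> c' = Suc s")
      case True thus ?thesis using c nb[of c] nb[of c'] by (auto simp: f0_def split: if_splits)
    next
      case False
      hence "x ! \<tau> (c - 1) = x ! \<tau> (c' - 1)" using c by (auto simp: f0_def)
      hence "\<tau> (c - 1) = \<tau> (c' - 1)" using dx lx tlt[of "c - 1"] tlt[of "c' - 1"] c False
        by (auto simp: nth_eq_iff_index_eq)
      hence "c - 1 = c' - 1" by (metis tt)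
      thus ?thesis using c by auto
    qed
  qed
  moreover have "f0 ` {1..Suc s} \<subseteq> {1..n}"
  proof
    fix v assume "v \<in> f0 ` {1..Suc s}"
    then obtain c where c: "c \<in> {1..Suc s}" "v = f0 c" by auto
    show "v \<in> {1..n}"
    proof (cases "c = Suc s")
      case True thus ?thesis using c jb by (simp add: f0_def)
    next
      case False
      hence "\<tau> (c - 1) < s" using c tlt by auto
      thus ?thesis using c False sx lx by (auto simp: f0_def intro!: subsetD[OF sx] nth_mem)
    qed
  qed
  moreover have "{1..Suc s} \<subseteq> {1..n}" using sn by auto
  ultimately obtain \<sigma> where sg: "\<sigma> permutes {1..n}" "\<forall>c\<in>{1..Suc s}. \<sigma> c = f0 c"
    using extend_perm[of "{1..n}" "{1..Suc s}" f0] by auto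
  define h where "h = (\<sigma>, \<tau>)"
  have hG: "h \<in> G" using sg tp by (simp add: h_def Grp_def)
  have lu: "length u0 = s" by (simp add: u0_def)
  have "act h u0 = x"
  proof (rule nth_equalityI)
    show "length (act h u0) = length x" using lu lx by simp
    fix i assume "i < length (act h u0)"
    hence i: "i < s" using lu by simp
    have "act h u0 ! i = \<sigma> (Suc (\<tau> i))" using i tlt[OF i] lu by (simp add: h_def u0_def)
    also have "\<dots> = f0 (Suc (\<tau> i))" using sg tlt[OF i] by auto
    also have "\<dots> = x ! i" using tlt[OF i] tt by (simp add: f0_def)
    finally show "act h u0 ! i = x ! i" .
  qed
  moreover have "act h (u0[0 := Suc s]) = y"
  proof (rule nth_equalityI)
    show "length (act h (u0[0 := Suc s])) = length y" using lu lx jb by simp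
    fix i assume "i < length (act h (u0[0 := Suc s]))"
    hence i: "i < s" using lu by simp
    show "act h (u0[0 := Suc s]) ! i = y ! i"
    proof (cases "i = j")
      case True
      hence "\<tau> i = 0" by (simp add: \<tau>_def)
      thus ?thesis using i lu sg True jb lx by (simp add: h_def f0_def)
    next
      case False
      hence t0: "\<tau> i \<noteq> 0" by (metis \<tau>_def transpose_apply_second tt)
      have "act h (u0[0 := Suc s]) ! i = \<sigma> (Suc (\<tau> i))"
        using i tlt[OF i] lu t0 by (simp add: h_def u0_def nth_list_update)
      also have "\<dots> = f0 (Suc (\<tau> i))" using sg tlt[OF i] by auto
      also have "\<dots> = x ! i" using tlt[OF i] tt by (simp add: f0_def)
      finally show ?thesis using False jb by simp
    qed
  qed
  ultimately have "eimg h e0 = f" using xy by (simp add: eimg_def e0_def)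
  thus ?thesis using hG by blast
qed

end



lemma card_swap:
  assumes "finite A" "finite B"
  shows "(\<Sum>a\<in>A. card {b\<in>B. P a b}) = (\<Sum>b\<in>B. card {a\<in>A. P a b})"
proof -
  have "(\<Sum>a\<in>A. card {b\<in>B. P a b}) = (\<Sum>a\<in>A. \<Sum>b\<in>B. if P a b then 1 else 0)"
    using assms by (simp add: sum.inter_filter[symmetric])
  also have "\<dots> = (\<Sum>b\<in>B. \<Sum>a\<in>A. if P a b then 1 else 0)" by (rule sum.swap)
  also have "\<dots> = (\<Sum>b\<in>B. card {a\<in>A. P a b})" using assms by (simp add: sum.inter_filter[symmetric])
  finally show ?thesis .
qed

lemma perfect_from:
  assumes "finite E'" "X \<subseteq> E'" "\<And>v. v \<in> V \<Longrightarrow> card {e\<in>X. v \<in> e} = 1"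
  shows "has_perfect_int_matching k V E'"
proof -
  define h where "h e = (if e \<in> X then k else 0)" for e :: "'a set"
  have sv: "(\<Sum>e\<in>incident_edges E' v. h e) = k" if "v \<in> V" for v
  proof -
    have fi: "finite (incident_edges E' v)" using assms(1) by (simp add: incident_edges_def)
    have "(\<Sum>e\<in>incident_edges E' v. h e) = (\<Sum>e\<in>{e \<in> incident_edges E' v. e \<in> X}. k)"
      unfolding h_def by (rule sum.inter_filter[OF fi, symmetric])
    also have "{e \<in> incident_edges E' v. e \<in> X} = {e\<in>X. v \<in> e}"
      using assms(2) by (auto simp: incident_edges_def)
    finally show ?thesis using assms(3)[OF that] by simp
  qed
  have "is_int_matching k V E' h" using sv by (auto simp: is_int_matching_def h_def)
  thus ?thesis using sv unfolding has_perfect_int_matching_def by blast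
qed

context arr
begin

definition M :: "nat list set set" where "M = (\<lambda>x. {x, phi n s x}) ` V"
definition Mg where "Mg g = eimg g ` M"

lemma M_E: "M \<subseteq> E"
  using phi_props by (auto simp: M_def arr_edges_def)

lemma Mg_E: assumes "g \<in> G" shows "Mg g \<subseteq> E"
  unfolding Mg_def using M_E eimg_E[OF assms] by blast

lemma Mg_unique: assumes "g \<in> G" "v \<in> V" shows "card {e\<in>Mg g. v \<in> e} = 1"
proof -
  have "v \<in> act g ` V" using act_surj[OF assms(1)] assms(2) by simp
  then obtain x where x: "x \<in> V" "act g x = v" by (metis imageE)
  have "{e\<in>Mg g. v \<in> e} = {eimg g {x, phi n s x}}"
  proof (intro set_eqI iffI)
    fix e assume "e \<in> {e\<in>Mg g. v \<in> e}"
    hence e1: "e \<in> Mg g" "v \<in> e" by auto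
    from e1(1) obtain y where y0: "y \<in> V" "e = eimg g {y, phi n s y}" unfolding Mg_def M_def image_image by blast
    have y: "y \<in> V" "e = eimg g {y, phi n s y}" "v \<in> e" using y0 e1 by auto
    have py: "phi n s y \<in> V" "phi n s (phi n s y) = y" using phi_props[OF y(1)] by auto
    have "eimg g {y, phi n s y} = {act g y, act g (phi n s y)}" by (simp add: eimg_def)
    hence "v = act g y \<or> v = act g (phi n s y)" using y by simp
    moreover have "act g x = act g y \<Longrightarrow> x = y"
      using inj_onD[OF act_inj[OF assms(1)] _ x(1) y(1)] .
    moreover have "act g x = act g (phi n s y) \<Longrightarrow> x = phi n s y"
      using inj_onD[OF act_inj[OF assms(1)] _ x(1) py(1)] .
    ultimately have "x = y \<or> x = phi n s y" using x(2) by auto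
    moreover have "{phi n s y, y} = {y, phi n s y}" by blast
    ultimately have "{x, phi n s x} = {y, phi n s y}" using py(2) by auto
    thus "e \<in> {eimg g {x, phi n s x}}" using y by simp
  next
    fix e assume "e \<in> {eimg g {x, phi n s x}}"
    hence e: "e = eimg g {x, phi n s x}" by simp
    have "eimg g {x, phi n s x} \<in> Mg g" unfolding Mg_def M_def using x(1) by blast
    moreover have "v \<in> eimg g {x, phi n s x}" using x(2) by (simp add: eimg_def)
    ultimately show "e \<in> {e\<in>Mg g. v \<in> e}" using e by simp
  qed
  thus ?thesis by simp
qed

lemma act_id: "length x = s \<Longrightarrow> act (id, id) x = x"
  by (rule nth_equalityI) auto

lemma Mg_id: "Mg (id, id) = M"
proof -
  have "eimg (id, id) e = e" if "e \<in> M" for e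
  proof -
    have "e \<subseteq> V" using that M_E E_sub by blast
    have "act (id, id) ` e = id ` e"
      by (rule image_cong) (use \<open>e \<subseteq> V\<close> act_id in \<open>auto simp: arr_vertices_def\<close>)
    thus ?thesis by (simp add: eimg_def)
  qed
  thus ?thesis by (simp add: Mg_def)
qed

lemma finite_M: "finite M" using M_E finite_E finite_subset by blast

lemma card_Mg: assumes "g \<in> G" shows "card (Mg g) = card M"
proof -
  have "inj_on (eimg g) M"
  proof (rule inj_onI)
    fix e1 e2 assume "e1 \<in> M" "e2 \<in> M" "eimg g e1 = eimg g e2"
    moreover have "e1 \<subseteq> V" "e2 \<subseteq> V" using \<open>e1 \<in> M\<close> \<open>e2 \<in> M\<close> M_E E_sub by blast+
    ultimately show "e1 = e2" using inj_on_image_eq_iff[OF act_inj[OF assms]] by (simp add: eimg_def)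
  qed
  thus ?thesis by (simp add: Mg_def card_image)
qed

lemma card_V_pos: "card V > 0" using u0_V finite_V card_gt_0_iff by blast

lemma card_M2: "2 * card M = card V"
proof -
  have "(\<Sum>v\<in>V. card {e\<in>M. v \<in> e}) = 2 * card M"
    by (rule handshake[OF finite_V finite_M]) (use M_E E_sub in blast)
  moreover have "(\<Sum>v\<in>V. card {e\<in>M. v \<in> e}) = card V"
    using Mg_unique[OF id_G] by (simp add: Mg_id)
  ultimately show ?thesis by simp
qed

lemma card_E2: "2 * card E = s * (n - s) * card V"
proof -
  have "(\<Sum>v\<in>V. card {e\<in>E. v \<in> e}) = 2 * card E"
    by (rule handshake[OF finite_V finite_E]) (use E_sub in blast)
  moreover have "(\<Sum>v\<in>V. card {e\<in>E. v \<in> e}) = s * (n - s) * card V"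
    using degree by (simp add: incident_edges_def)
  ultimately show ?thesis by simp
qed

definition cnt where "cnt f = card {g\<in>G. f \<in> Mg g}"

lemma Mg_mult: assumes "h \<in> G" "g \<in> G" shows "Mg (mult h g) = eimg h ` Mg g"
proof -
  have "eimg (mult h g) e = eimg h (eimg g e)" if "e \<in> M" for e
    using eimg_mult[OF assms] that M_E E_sub by blast
  thus ?thesis by (auto simp: Mg_def image_image)
qed

lemma cnt_const: assumes "f \<in> E" shows "cnt f = cnt e0"
proof -
  obtain h where h: "h \<in> G" "eimg h e0 = f" using edge_trans[OF assms] by blast
  have "{g\<in>G. f \<in> Mg g} = mult h ` {g\<in>G. e0 \<in> Mg g}"
  proof (intro set_eqI iffI)
    fix g' assume "g' \<in> {g\<in>G. f \<in> Mg g}"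
    hence g': "g' \<in> G" "f \<in> Mg g'" by auto
    then obtain g where g: "g \<in> G" "g' = mult h g" using mult_surj[OF h(1)] by blast
    then obtain e where e: "e \<in> Mg g" "eimg h e = eimg h e0" using g' Mg_mult h by auto
    have "e \<subseteq> V" using e(1) Mg_E[OF g(1)] E_sub by blast
    moreover have "e0 \<subseteq> V" using e0_E E_sub by blast
    ultimately have "e = e0" using e(2) inj_on_image_eq_iff[OF act_inj[OF h(1)]] by (simp add: eimg_def)
    thus "g' \<in> mult h ` {g\<in>G. e0 \<in> Mg g}" using g e by auto
  next
    fix g' assume "g' \<in> mult h ` {g\<in>G. e0 \<in> Mg g}"
    then obtain g where g: "g \<in> G" "e0 \<in> Mg g" "g' = mult h g" by auto
    thus "g' \<in> {g\<in>G. f \<in> Mg g}" using mult_G[OF h(1) g(1)] Mg_mult[OF h(1) g(1)] h(2) by auto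
  qed
  moreover have "inj_on (mult h) {g\<in>G. e0 \<in> Mg g}" using mult_inj[OF h(1)] by (auto intro: inj_onI)
  ultimately show ?thesis by (simp add: cnt_def card_image)
qed

lemma cnt_eq: "cnt e0 * (s * (n - s)) = card G"
proof -
  have "(\<Sum>f\<in>E. cnt f) = (\<Sum>g\<in>G. card {f\<in>E. f \<in> Mg g})"
    unfolding cnt_def by (rule card_swap[OF finite_E finite_G])
  also have "\<dots> = (\<Sum>g\<in>G. card M)"
  proof (rule sum.cong)
    fix g assume "g \<in> G"
    hence "{f\<in>E. f \<in> Mg g} = Mg g" using Mg_E by blast
    thus "card {f\<in>E. f \<in> Mg g} = card M" using card_Mg \<open>g \<in> G\<close> by simp
  qed simp
  finally have "card E * cnt e0 = card G * card M" using cnt_const by simp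
  hence "2 * card E * cnt e0 = card G * (2 * card M)" by simp
  hence "s * (n - s) * card V * cnt e0 = card G * card V" using card_E2 card_M2 by simp
  thus ?thesis using card_V_pos by (simp add: mult.commute mult.left_commute)
qed

lemma lower:
  assumes "F \<subseteq> E" "card F < s * (n - s)"
  shows "has_perfect_int_matching k V (E - F)"
proof -
  have fF: "finite F" using assms(1) finite_E finite_subset by blast
  have "\<exists>g\<in>G. Mg g \<inter> F = {}"
  proof (rule ccontr)
    assume "\<not> ?thesis"
    hence ne: "\<forall>g\<in>G. Mg g \<inter> F \<noteq> {}" by blast
    have "(\<Sum>f\<in>F. cnt f) = (\<Sum>g\<in>G. card {f\<in>F. f \<in> Mg g})"
      unfolding cnt_def by (rule card_swap[OF fF finite_G])
    also have "\<dots> \<ge> (\<Sum>g\<in>G. 1)"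
    proof (rule sum_mono)
      fix g assume "g \<in> G"
      hence "{f\<in>F. f \<in> Mg g} \<noteq> {}" using ne by blast
      thus "1 \<le> card {f\<in>F. f \<in> Mg g}" using fF by (simp add: Suc_le_eq card_gt_0_iff)
    qed
    finally have "card G \<le> (\<Sum>f\<in>F. cnt f)" by simp
    also have "(\<Sum>f\<in>F. cnt f) = card F * cnt e0" using cnt_const assms(1) by (simp add: subset_iff)
    finally have "card G \<le> card F * cnt e0" .
    moreover have "card G > 0" using id_G finite_G card_gt_0_iff by blast
    ultimately have "card F * cnt e0 < s * (n - s) * cnt e0"
      using cnt_eq assms(2) by (metis mult.commute mult_less_cancel1 neq0_conv mult_0_right less_le_trans)
    moreover have "s * (n - s) * cnt e0 = card G" using cnt_eq by (simp add: mult.commute)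
    ultimately show False using \<open>card G \<le> card F * cnt e0\<close> by linarith
  qed
  then obtain g where g: "g \<in> G" "Mg g \<inter> F = {}" by blast
  show ?thesis
    by (rule perfect_from[where X="Mg g"]) (use finite_E Mg_E[OF g(1)] g Mg_unique in auto)
qed

end



theorem mainTheorem8:
  fixes k n s :: nat
  assumes "odd k" and "k \<ge> 3" and "2 \<le> s" and "s \<le> n - 2"
  shows "mp_int k (arr_vertices n s) (arr_edges n s) = s * (n - s)"
proof -
  interpret arr n s using assms by unfold_locales auto
  define F0 where "F0 = incident_edges (arr_edges n s) u0"
  have inc0: "incident_edges (arr_edges n s - F0) u0 = {}" by (auto simp: F0_def incident_edges_def)
  have np: "\<not> has_perfect_int_matching k (arr_vertices n s) (arr_edges n s - F0)"
    using inc0 u0_V assms(2) unfolding has_perfect_int_matching_def by force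
  have na: "\<not> has_almost_perfect_int_matching k (arr_vertices n s) (arr_edges n s - F0)"
  proof
    assume "has_almost_perfect_int_matching k (arr_vertices n s) (arr_edges n s - F0)"
    then obtain h u where u: "u \<in> arr_vertices n s"
      "(\<Sum>e\<in>incident_edges (arr_edges n s - F0) u. h e) = k - 1"
      "\<forall>v\<in>arr_vertices n s. v \<noteq> u \<longrightarrow> (\<Sum>e\<in>incident_edges (arr_edges n s - F0) v. h e) = k"
      unfolding has_almost_perfect_int_matching_def by blast
    show False
    proof (cases "u = u0")
      case True thus False using u(2) inc0 assms(2) by simp
    next
      case False thus False using u(3) u0_V inc0 assms(2) by force
    qed
  qed
  have F0E: "F0 \<subseteq> arr_edges n s" by (auto simp: F0_def incident_edges_def)
  have cF0: "card F0 = s * (n - s)" using degree[OF u0_V] by (simp add: F0_def)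
  show ?thesis unfolding mp_int_def
  proof (rule Least_equality)
    show "\<exists>F. F \<subseteq> arr_edges n s \<and> card F = s * (n - s) \<and>
        \<not> has_perfect_int_matching k (arr_vertices n s) (arr_edges n s - F) \<and>
        \<not> has_almost_perfect_int_matching k (arr_vertices n s) (arr_edges n s - F)"
      using F0E cF0 np na by blast
  next
    fix m assume "\<exists>F. F \<subseteq> arr_edges n s \<and> card F = m \<and>
        \<not> has_perfect_int_matching k (arr_vertices n s) (arr_edges n s - F) \<and>
        \<not> has_almost_perfect_int_matching k (arr_vertices n s) (arr_edges n s - F)"
    then obtain F where F: "F \<subseteq> arr_edges n s" "card F = m"
      "\<not> has_perfect_int_matching k (arr_vertices n s) (arr_edges n s - F)" by blast
    show "s * (n - s) \<le> m"
    proof (rule ccontr)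
      assume "\<not> s * (n - s) \<le> m"
      hence "card F < s * (n - s)" using F(2) by simp
      thus False using lower[OF F(1)] F(3) by blast
    qed
  qed
qed

end
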